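(* Let $X$ be a real Hilbert space, let $f\colon X\to\,]-\infty,+\infty]$ be proper and lower semicontinuous such that there exist $\nu\in\mathbb R$, $\beta\in\mathbb R$, $\alpha\ge 0$ with $f(x)\ge -\alpha\|x\|^2-\beta\|x\|+\nu$ for all $x\in X$. Let $\lambda>0$ and $\mu\in\,]0,\lambda[$. Then the following are equivalent: (i) $f$ is $\tfrac1\lambda$-hypoconvex; (ii) $\mathrm{Id}-\operatorname{Prox}_{\mu f}$ is $\tfrac{\lambda}{2(\lambda-\mu)}$-conically nonexpansive; (iii) $\operatorname{Prox}_{\mu f}$ is $\tfrac{\lambda-\mu}{\lambda}$-cocoercive.
   Context: $\operatorname{Prox}_{\mu f}(x)=\operatorname{argmin}_{y\in X}\big(f(y)+\tfrac{1}{2\mu}\|x-y\|^2\big)$. $f$ is $\tfrac1\lambda$-hypoconvex if $f((1-\tau)x+\tau y)\le(1-\tau)f(x)+\tau f(y)+\tfrac{1}{2\lambda}\tau(1-\tau)\|x-y\|^2$ for all $x,y\in X$, $\tau\in]0,1[$. For $\gamma>0$, an operator $T\colon X\to X$ is $\gamma$-cocoercive if $\langle x-y,Tx-Ty\rangle\ge\gamma\|Tx-Ty\|^2$ for all $x,y$; for $\alpha>0$, $T$ is $\alpha$-conically nonexpansive if $T=(1-\alpha)\mathrm{Id}+\alpha N$ for some nonexpansive ($1$-Lipschitz) $N\colon X\to X$. *)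

theory Defs
  imports "HOL-Analysis.Analysis" "HOL-Library.Extended_Real"
begin

text \<open>Functions X \<rightarrow> ]-\<infinity>,+\<infinity>] are modelled as maps into ereal that never take the value -\<infinity>.\<close>

definition proper_fun :: "('a \<Rightarrow> ereal) \<Rightarrow> bool" where
  "proper_fun f \<longleftrightarrow> (\<forall>x. f x \<noteq> -\<infinity>) \<and> (\<exists>x. f x \<noteq> \<infinity>)"

definition lsc :: "('a::topological_space \<Rightarrow> ereal) \<Rightarrow> bool" where
  "lsc f \<longleftrightarrow> (\<forall>x. f x \<le> Liminf (at x) f)"

definition Prox :: "real \<Rightarrow> ('a::real_normed_vector \<Rightarrow> ereal) \<Rightarrow> 'a \<Rightarrow> 'a set" where
  "Prox \<mu> f x = {y. \<forall>z. f y + ereal ((norm (x - y))\<^sup>2 / (2 * \<mu>))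
                        \<le> f z + ereal ((norm (x - z))\<^sup>2 / (2 * \<mu>))}"

definition hypoconvex :: "real \<Rightarrow> ('a::real_normed_vector \<Rightarrow> ereal) \<Rightarrow> bool" where
  "hypoconvex \<rho> f \<longleftrightarrow> (\<forall>x y \<tau>. 0 < \<tau> \<and> \<tau> < 1 \<longrightarrow>
     f ((1 - \<tau>) *\<^sub>R x + \<tau> *\<^sub>R y)
       \<le> ereal (1 - \<tau>) * f x + ereal \<tau> * f y + ereal (\<rho> / 2 * \<tau> * (1 - \<tau>) * (norm (x - y))\<^sup>2))"

definition cocoercive :: "real \<Rightarrow> ('a::real_inner \<Rightarrow> 'a) \<Rightarrow> bool" where
  "cocoercive \<gamma> T \<longleftrightarrow> (\<forall>x y. inner (x - y) (T x - T y) \<ge> \<gamma> * (norm (T x - T y))\<^sup>2)"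

definition nonexpansive :: "('a::real_normed_vector \<Rightarrow> 'a) \<Rightarrow> bool" where
  "nonexpansive N \<longleftrightarrow> (\<forall>x y. norm (N x - N y) \<le> norm (x - y))"

definition conically_nonexpansive :: "real \<Rightarrow> ('a::real_normed_vector \<Rightarrow> 'a) \<Rightarrow> bool" where
  "conically_nonexpansive \<alpha> T \<longleftrightarrow>
     (\<exists>N. nonexpansive N \<and> (\<forall>x. T x = (1 - \<alpha>) *\<^sub>R x + \<alpha> *\<^sub>R N x))"

end

theory Submission
  imports Defs
begin



lemma lsc_seq:
  fixes f :: "'a::metric_space \<Rightarrow> ereal"
  assumes "lsc f" "y \<longlonglongrightarrow> p" "\<And>n. f (y n) \<le> ereal (b n)" "b \<longlonglongrightarrow> L"
  shows "f p \<le> ereal L"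
proof (rule ccontr)
  assume "\<not> f p \<le> ereal L"
  then have "ereal L < f p" by simp
  then obtain c where c: "ereal L < ereal c" "ereal c < f p" using ereal_dense2 by blast
  have "ereal c < Liminf (at p) f" using c assms(1) unfolding lsc_def
    by (meson less_le_trans)
  then have "eventually (\<lambda>x. f x > ereal c) (at p)" by (rule less_LiminfD)
  then obtain d where d: "d > 0" "\<And>x. x \<noteq> p \<and> dist x p < d \<Longrightarrow> f x > ereal c"
    unfolding eventually_at by auto
  have d': "\<And>x. dist x p < d \<Longrightarrow> f x > ereal c" using d c(2) by metis
  have "eventually (\<lambda>n. dist (y n) p < d) sequentially"
    using assms(2) d(1) by (simp add: tendsto_iff)
  moreover have "eventually (\<lambda>n. b n < c) sequentially"
    using assms(4) c(1) by (simp add: order_tendstoD(2))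
  ultimately have "eventually (\<lambda>n. False) sequentially"
  proof eventually_elim
    case (elim n)
    then have "ereal c < f (y n)" using d' by blast
    also have "\<dots> \<le> ereal (b n)" by (rule assms(3))
    finally show False using elim by simp
  qed
  then show False by simp
qed

lemma nd2: "(norm (u - v))\<^sup>2 = (norm u)\<^sup>2 - 2 * inner u v + (norm (v::'a::real_inner))\<^sup>2"
  by (simp add: power2_norm_eq_inner inner_diff_left inner_diff_right inner_commute)

lemma nd2s: "(norm (u - c *\<^sub>R v))\<^sup>2 = (norm u)\<^sup>2 - 2 * c * inner u v + c\<^sup>2 * (norm (v::'a::real_inner))\<^sup>2"
  by (simp add: nd2 power_mult_distrib)

lemma conic_iff:
  fixes T :: "'a::real_inner \<Rightarrow> 'a"
  assumes "lam > 0" "0 < \<mu>" "\<mu> < lam"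
  shows "conically_nonexpansive (lam / (2 * (lam - \<mu>))) (\<lambda>x. x - T x)
     \<longleftrightarrow> cocoercive ((lam - \<mu>) / lam) T"
proof -
  define a where "a = lam / (2 * (lam - \<mu>))"
  have a0: "a > 0" using assms by (simp add: a_def)
  have ga: "(lam - \<mu>) / lam = 1 / (2 * a)" using assms by (simp add: a_def field_simps)
  have key: "norm ((x - y) - (1/a) *\<^sub>R (T x - T y)) \<le> norm (x - y) \<longleftrightarrow>
      1 / (2 * a) * (norm (T x - T y))\<^sup>2 \<le> inner (x - y) (T x - T y)" for x y
  proof -
    have "norm ((x - y) - (1/a) *\<^sub>R (T x - T y)) \<le> norm (x - y) \<longleftrightarrow>
       (norm ((x - y) - (1/a) *\<^sub>R (T x - T y)))\<^sup>2 \<le> (norm (x - y))\<^sup>2"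
      by (metis norm_ge_zero power2_le_imp_le power_mono)
    also have "(norm ((x - y) - (1/a) *\<^sub>R (T x - T y)))\<^sup>2 = (norm (x - y))\<^sup>2
        - 2 * (1/a) * inner (x - y) (T x - T y) + (1/a)\<^sup>2 * (norm (T x - T y))\<^sup>2"
      by (rule nd2s)
    also have "\<dots> \<le> (norm (x - y))\<^sup>2 \<longleftrightarrow> (1/a)\<^sup>2 * (norm (T x - T y))\<^sup>2 \<le> 2 * (1/a) * inner (x - y) (T x - T y)"
      by linarith
    also have "\<dots> \<longleftrightarrow> (a\<^sup>2/2) * ((1/a)\<^sup>2 * (norm (T x - T y))\<^sup>2) \<le> (a\<^sup>2/2) * (2 * (1/a) * inner (x - y) (T x - T y))"
      by (rule mult_le_cancel_left_pos[symmetric]) (use a0 in simp)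
    also have "(a\<^sup>2/2) * ((1/a)\<^sup>2 * (norm (T x - T y))\<^sup>2) = 1 / (2 * a) * (norm (T x - T y))\<^sup>2 * a"
      using a0 by (simp add: power2_eq_square field_simps)
    also have "(a\<^sup>2/2) * (2 * (1/a) * inner (x - y) (T x - T y)) = inner (x - y) (T x - T y) * a"
      using a0 by (simp add: power2_eq_square field_simps)
    finally show ?thesis using a0 by (simp only: mult_le_cancel_right_pos)
  qed
  show ?thesis
  proof
    assume "conically_nonexpansive (lam / (2 * (lam - \<mu>))) (\<lambda>x. x - T x)"
    then obtain N where N: "nonexpansive N" "\<And>x. x - T x = (1 - a) *\<^sub>R x + a *\<^sub>R N x"
      unfolding conically_nonexpansive_def a_def by blast
    have "N x = x - (1/a) *\<^sub>R T x" for x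
    proof -
      have "a *\<^sub>R N x = a *\<^sub>R (x - (1/a) *\<^sub>R T x)" using N(2)[of x] a0
        by (simp add: algebra_simps)
      then show ?thesis using a0 by simp
    qed
    then have "N x - N y = (x - y) - (1/a) *\<^sub>R (T x - T y)" for x y
      by (simp add: scaleR_right_diff_distrib)
    then have "norm ((x - y) - (1/a) *\<^sub>R (T x - T y)) \<le> norm (x - y)" for x y
      using N(1) unfolding nonexpansive_def by metis
    then show "cocoercive ((lam - \<mu>) / lam) T" unfolding cocoercive_def ga using key by blast
  next
    assume "cocoercive ((lam - \<mu>) / lam) T"
    then have "norm ((x - y) - (1/a) *\<^sub>R (T x - T y)) \<le> norm (x - y)" for x y
      unfolding cocoercive_def ga using key by blast
    then have "nonexpansive (\<lambda>x. x - (1/a) *\<^sub>R T x)" unfolding nonexpansive_def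
      by (simp add: algebra_simps)
    moreover have "x - T x = (1 - a) *\<^sub>R x + a *\<^sub>R (x - (1/a) *\<^sub>R T x)" for x
      using a0 by (simp add: algebra_simps)
    ultimately show "conically_nonexpansive (lam / (2 * (lam - \<mu>))) (\<lambda>x. x - T x)"
      unfolding conically_nonexpansive_def a_def[symmetric] by blast
  qed
qed



lemma lb_arith:
  fixes \<sigma> \<alpha> \<beta> \<nu> t Gw G0 Gy d nw c0 :: real
  assumes "\<sigma> > 0" "\<alpha> \<ge> 0" "0 < t" "t \<le> 1/2" "16 * \<alpha> * t \<le> \<sigma>"
    "Gw \<le> (1-t) * G0 + t * Gy - \<sigma>/2 * t * (1-t) * d\<^sup>2" "Gw \<ge> -\<alpha> * nw\<^sup>2 - \<beta> * nw + \<nu>"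
    "0 \<le> nw" "nw \<le> c0 + t * d" "d \<ge> 0" "c0 \<ge> 0"
  shows "Gy \<ge> (\<nu> - 2*\<alpha>*c0\<^sup>2 - \<bar>\<beta>\<bar>*c0 - (1-t) * G0)/t - 2*\<beta>\<^sup>2/\<sigma>"
proof -
  have "nw\<^sup>2 \<le> (c0 + t*d)\<^sup>2" using assms by (simp add: power_mono)
  also have "\<dots> = 2*c0\<^sup>2 + 2*t\<^sup>2*d\<^sup>2 - (c0 - t*d)\<^sup>2" by (simp add: power2_eq_square algebra_simps)
  also have "\<dots> \<le> 2*c0\<^sup>2 + 2*t\<^sup>2*d\<^sup>2" by simp
  finally have n2: "nw\<^sup>2 \<le> 2*c0\<^sup>2 + 2*t\<^sup>2*d\<^sup>2" .
  have "\<alpha> * nw\<^sup>2 \<le> \<alpha> * (2*c0\<^sup>2 + 2*t\<^sup>2*d\<^sup>2)" using n2 assms(2) by (rule mult_left_mono)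
  then have a1: "-\<alpha> * nw\<^sup>2 \<ge> -2*\<alpha>*c0\<^sup>2 - 2*\<alpha>*t\<^sup>2*d\<^sup>2" by (simp add: algebra_simps)
  have a2: "-\<beta> * nw \<ge> -\<bar>\<beta>\<bar>*c0 - \<bar>\<beta>\<bar>*t*d"
  proof -
    have "\<beta> * nw \<le> \<bar>\<beta>\<bar> * nw" using assms(8) by (simp add: mult_right_mono)
    also have "\<dots> \<le> \<bar>\<beta>\<bar> * (c0 + t*d)" using assms(9) by (simp add: mult_left_mono)
    finally show ?thesis by (simp add: algebra_simps)
  qed
  define K0 where "K0 = \<nu> - 2*\<alpha>*c0\<^sup>2 - \<bar>\<beta>\<bar>*c0 - (1-t) * G0"
  have "t * Gy \<ge> K0 - 2*\<alpha>*t\<^sup>2*d\<^sup>2 - \<bar>\<beta>\<bar>*t*d + \<sigma>/2 * t * (1-t) * d\<^sup>2"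
    using assms(6,7) a1 a2 unfolding K0_def by linarith
  moreover have "\<sigma>/2 * t * (1-t) * d\<^sup>2 - 2*\<alpha>*t\<^sup>2*d\<^sup>2 \<ge> t * (\<sigma>/8 * d\<^sup>2)"
  proof -
    have "\<sigma> * t \<le> \<sigma> * (1/2)" using assms(1,4) by (simp add: mult_left_mono)
    moreover have "\<sigma>/2 * (1-t) = \<sigma>/2 - \<sigma>*t/2" by (simp add: field_simps)
    ultimately have "\<sigma>/2 * (1-t) - 2*\<alpha>*t \<ge> \<sigma>/8" using assms(5) by linarith
    then have "t * d\<^sup>2 * (\<sigma>/2 * (1-t) - 2*\<alpha>*t) \<ge> t * d\<^sup>2 * (\<sigma>/8)"
      using assms(3) by (simp add: mult_left_mono)
    then show ?thesis by (simp add: algebra_simps power2_eq_square)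
  qed
  moreover have "\<sigma>/8 * d\<^sup>2 - \<bar>\<beta>\<bar> * d \<ge> - 2*\<beta>\<^sup>2/\<sigma>"
  proof -
    have "0 \<le> \<sigma>/8 * (d - 4*\<bar>\<beta>\<bar>/\<sigma>)\<^sup>2" using assms(1) by simp
    also have "\<sigma>/8 * (d - 4*\<bar>\<beta>\<bar>/\<sigma>)\<^sup>2 = \<sigma>/8 * d\<^sup>2 - \<bar>\<beta>\<bar> * d + 2*\<beta>\<^sup>2/\<sigma>"
      using assms(1) by (simp add: power2_eq_square field_simps)
    finally show ?thesis by simp
  qed
  moreover have "t * (\<sigma>/8 * d\<^sup>2) - \<bar>\<beta>\<bar>*t*d = t * (\<sigma>/8 * d\<^sup>2 - \<bar>\<beta>\<bar> * d)" by (simp add: algebra_simps)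
  moreover have "t * (\<sigma>/8 * d\<^sup>2 - \<bar>\<beta>\<bar> * d) \<ge> t * (- 2*\<beta>\<^sup>2/\<sigma>)"
    using assms(3) calculation(3) by (intro mult_left_mono) auto
  ultimately have "t * Gy \<ge> K0 + t * (- 2*\<beta>\<^sup>2/\<sigma>)"
    by linarith
  then have "Gy \<ge> K0/t - 2*\<beta>\<^sup>2/\<sigma>" using assms(3)
    by (simp add: field_simps)
  then show ?thesis unfolding K0_def .
qed


lemma conv_sq:
  fixes u v :: "'a::real_inner"
  shows "(norm ((1 - t) *\<^sub>R u + t *\<^sub>R v))\<^sup>2 = (1 - t) * (norm u)\<^sup>2 + t * (norm v)\<^sup>2 - t * (1 - t) * (norm (u - v))\<^sup>2"
  by (simp add: power2_norm_eq_inner inner_add_left inner_add_right inner_diff_left inner_diff_right inner_commute algebra_simps)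

lemma conv_sq2:
  fixes x a b :: "'a::real_inner"
  shows "(norm (x - ((1 - t) *\<^sub>R a + t *\<^sub>R b)))\<^sup>2 = (1 - t) * (norm (x - a))\<^sup>2 + t * (norm (x - b))\<^sup>2 - t * (1 - t) * (norm (a - b))\<^sup>2"
proof -
  have "x - ((1 - t) *\<^sub>R a + t *\<^sub>R b) = (1 - t) *\<^sub>R (x - a) + t *\<^sub>R (x - b)"
    by (simp add: algebra_simps)
  moreover have "(x - a) - (x - b) = b - a" by simp
  ultimately show ?thesis using conv_sq[of t "x - a" "x - b"] by (simp add: norm_minus_commute)
qed

context
  fixes f :: "'a::{real_inner, complete_space} \<Rightarrow> ereal" and lam \<mu> :: real
  assumes proper: "proper_fun f" and lsc: "lsc f" and lam: "lam > 0" "0 < \<mu>" "\<mu> < lam"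
begin

lemma fin: "f y \<noteq> \<infinity> \<Longrightarrow> f y = ereal (real_of_ereal (f y))"
  using proper unfolding proper_fun_def by (cases "f y") auto

lemma hyp_real:
  assumes hyp: "hypoconvex (1/lam) f" and fa: "f a \<noteq> \<infinity>" and fb: "f b \<noteq> \<infinity>" and t: "0 < t" "t < 1"
  shows "f ((1 - t) *\<^sub>R a + t *\<^sub>R b) \<noteq> \<infinity> \<and>
    real_of_ereal (f ((1 - t) *\<^sub>R a + t *\<^sub>R b)) \<le> (1 - t) * real_of_ereal (f a) + t * real_of_ereal (f b)
       + 1 / lam / 2 * t * (1 - t) * (norm (a - b))\<^sup>2"
proof -
  let ?c = "(1 - t) *\<^sub>R a + t *\<^sub>R b"
  have "f ?c \<le> ereal (1 - t) * f a + ereal t * f b + ereal (1 / lam / 2 * t * (1 - t) * (norm (a - b))\<^sup>2)"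
    using hyp t unfolding hypoconvex_def by blast
  also have "\<dots> = ereal ((1 - t) * real_of_ereal (f a) + t * real_of_ereal (f b)
       + 1 / lam / 2 * t * (1 - t) * (norm (a - b))\<^sup>2)"
    using fin[OF fa] fin[OF fb] by (metis plus_ereal.simps(1) times_ereal.simps(1))
  finally have *: "f ?c \<le> ereal ((1 - t) * real_of_ereal (f a) + t * real_of_ereal (f b)
       + 1 / lam / 2 * t * (1 - t) * (norm (a - b))\<^sup>2)" .
  then have "f ?c \<noteq> \<infinity>" by auto
  with * show ?thesis using fin by (metis ereal_less_eq(3))
qed

abbreviation "G x y \<equiv> real_of_ereal (f y) + (norm (x - y))\<^sup>2 / (2 * \<mu>)"

lemma strong_conv:
  assumes hyp: "hypoconvex (1/lam) f" and fa: "f a \<noteq> \<infinity>" and fb: "f b \<noteq> \<infinity>" and t: "0 < t" "t < 1"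
  shows "f ((1 - t) *\<^sub>R a + t *\<^sub>R b) \<noteq> \<infinity> \<and>
    G x ((1 - t) *\<^sub>R a + t *\<^sub>R b) \<le> (1 - t) * G x a + t * G x b
       - (1/\<mu> - 1/lam) / 2 * t * (1 - t) * (norm (a - b))\<^sup>2"
proof -
  note h = hyp_real[OF hyp fa fb t]
  have q: "(norm (x - ((1 - t) *\<^sub>R a + t *\<^sub>R b)))\<^sup>2 / (2 * \<mu>) = (1 - t) * ((norm (x - a))\<^sup>2 / (2 * \<mu>)) + t * ((norm (x - b))\<^sup>2 / (2*\<mu>)) - t * (1 - t) * (norm (a - b))\<^sup>2 / (2 * \<mu>)"
    unfolding conv_sq2 using lam by (simp add: field_simps)
  have e: "(1/\<mu> - 1/lam) / 2 * t * (1 - t) * (norm (a - b))\<^sup>2 = t * (1 - t) * (norm (a - b))\<^sup>2 / (2 * \<mu>) - 1 / lam / 2 * t * (1 - t) * (norm (a - b))\<^sup>2"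
    using lam by (simp add: field_simps)
  show ?thesis using h unfolding q e by (simp add: algebra_simps)
qed


lemma mid_arith: "(m::real) \<le> A \<Longrightarrow> A \<le> (1-1/2)*a + 1/2*b - c \<Longrightarrow> c = s \<Longrightarrow> s \<le> (a+b)/2 - m"
  by (simp add: field_simps)

lemma opt_arith:
  fixes gp gc gz s t d :: real
  assumes "gp \<le> gc" "gc \<le> (1-t)*gp + t*gz - s*t*(1-t)*d" "t > 0"
  shows "gp + s*(1-t)*d \<le> gz"
proof -
  have e: "t*(gp + s*(1-t)*d) = gp - ((1-t)*gp) + s*t*(1-t)*d" by (simp add: algebra_simps)
  have "t*(gp + s*(1-t)*d) \<le> t * gz" unfolding e using assms(1,2) by linarith
  then show ?thesis using assms(3) by simp
qed

lemma cauchy_arith: "(ss::real) \<le> (aa+bb)/2 - mm \<Longrightarrow> aa < mm + uu \<Longrightarrow> bb < mm + vv \<Longrightarrow> uu \<le> ww \<Longrightarrow> vv \<le> ww \<Longrightarrow> ww < rr \<Longrightarrow> ss < rr"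
proof -
  assume a: "(ss::real) \<le> (aa+bb)/2 - mm" "aa < mm + uu" "bb < mm + vv" "uu \<le> ww" "vv \<le> ww" "ww < rr"
  have "2 * ss \<le> aa + bb - 2 * mm" using a(1) by (simp add: field_simps)
  then show "ss < rr" using a by linarith
qed

lemma sigma_pos: "1/\<mu> - 1/lam > 0" using lam by (simp add: field_simps)

lemma bdd_below_G:
  assumes hyp: "hypoconvex (1/lam) f" and al: "\<alpha> \<ge> 0"
    and gr: "\<forall>x. f x \<ge> ereal (- \<alpha> * (norm x)\<^sup>2 - \<beta> * norm x + \<nu>)"
  shows "\<exists>M. \<forall>y. f y \<noteq> \<infinity> \<longrightarrow> G x y \<ge> M"
proof -
  define \<sigma> where "\<sigma> = 1/\<mu> - 1/lam"
  have s0: "\<sigma> > 0" using sigma_pos unfolding \<sigma>_def .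
  obtain z0 where z0: "f z0 \<noteq> \<infinity>" using proper unfolding proper_fun_def by blast
  define t where "t = min (1/2) (\<sigma>/(16*\<alpha>+1))"
  have t00: "0 < t" using s0 al by (auto simp: t_def)
  have t01: "t \<le> 1/2" unfolding t_def by (rule min.cobounded1)
  have t0: "0 < t" "t \<le> 1/2" "t < 1" using t00 t01 by auto
  have t1: "16 * \<alpha> * t \<le> \<sigma>"
  proof -
    have "16 * \<alpha> * t \<le> 16 * \<alpha> * (\<sigma>/(16*\<alpha>+1))" using al unfolding t_def by (intro mult_left_mono) auto
    also have "\<dots> \<le> \<sigma>" using al s0 by (simp add: field_simps)
    finally show ?thesis .
  qed
  define c0 where "c0 = norm z0"
  show ?thesis
  proof (intro exI allI impI)
    fix y assume fy: "f y \<noteq> \<infinity>"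
    define w where "w = (1 - t) *\<^sub>R z0 + t *\<^sub>R y"
    note sc = strong_conv[OF hyp z0 fy t0(1) t0(3), of x, folded w_def, folded \<sigma>_def]
    have "ereal (- \<alpha> * (norm w)\<^sup>2 - \<beta> * norm w + \<nu>) \<le> f w" using gr by blast
    also have "f w = ereal (real_of_ereal (f w))" using fin sc by blast
    finally have "real_of_ereal (f w) \<ge> - \<alpha> * (norm w)\<^sup>2 - \<beta> * norm w + \<nu>" by simp
    then have gw: "G x w \<ge> - \<alpha> * (norm w)\<^sup>2 - \<beta> * norm w + \<nu>" using lam
      by (smt (verit) divide_nonneg_pos zero_le_power2)
    have "w = z0 + t *\<^sub>R (y - z0)" unfolding w_def by (simp add: algebra_simps)
    then have nw: "norm w \<le> c0 + t * norm (z0 - y)" unfolding c0_def using t0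
      by (metis norm_triangle_ineq norm_scaleR abs_of_pos norm_minus_commute)
    have sc2: "G x w \<le> (1-t)*G x z0 + t*G x y - \<sigma>/2*t*(1-t)*(norm (z0-y))\<^sup>2" using sc by simp
    show "G x y \<ge> (\<nu> - 2*\<alpha>*c0\<^sup>2 - \<bar>\<beta>\<bar>*c0 - (1-t) * G x z0)/t - 2*\<beta>\<^sup>2/\<sigma>"
      by (rule lb_arith[OF s0 al t0(1) t0(2) t1 sc2 gw norm_ge_zero nw norm_ge_zero]) (simp add: c0_def)
  qed
qed

lemma prox_min_exists:
  assumes hyp: "hypoconvex (1/lam) f" and al: "\<alpha> \<ge> 0"
    and gr: "\<forall>x. f x \<ge> ereal (- \<alpha> * (norm x)\<^sup>2 - \<beta> * norm x + \<nu>)"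
  shows "\<exists>p. f p \<noteq> \<infinity> \<and> (\<forall>z. f z \<noteq> \<infinity> \<longrightarrow> G x p \<le> G x z)"
proof -
  define \<sigma> where "\<sigma> = 1/\<mu> - 1/lam"
  have s0: "\<sigma> > 0" using sigma_pos unfolding \<sigma>_def .
  define S where "S = G x ` {y. f y \<noteq> \<infinity>}"
  obtain M where M: "\<And>y. f y \<noteq> \<infinity> \<Longrightarrow> G x y \<ge> M" using bdd_below_G[OF hyp al gr] by blast
  obtain z0 where z0: "f z0 \<noteq> \<infinity>" using proper unfolding proper_fun_def by blast
  have Sne: "S \<noteq> {}" using z0 unfolding S_def by blast
  have Sb: "bdd_below S" unfolding S_def bdd_below_def using M by blast
  define m where "m = Inf S"
  have mle: "\<And>y. f y \<noteq> \<infinity> \<Longrightarrow> m \<le> G x y"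
    unfolding m_def S_def using Sb S_def by (intro cInf_lower) auto
  have "\<forall>n. \<exists>y. f y \<noteq> \<infinity> \<and> G x y < m + inverse (real (Suc n))"
  proof
    fix n
    have "Inf S < m + inverse (real (Suc n))" unfolding m_def by simp
    from cInf_lessD[OF Sne this] show "\<exists>y. f y \<noteq> \<infinity> \<and> G x y < m + inverse (real (Suc n))"
      unfolding S_def by blast
  qed
  then obtain ys where ys: "\<And>n. f (ys n) \<noteq> \<infinity>" "\<And>n. G x (ys n) < m + inverse (real (Suc n))"
    by metis
  have mid: "\<sigma>/8 * (norm (y1 - y2))\<^sup>2 \<le> (G x y1 + G x y2)/2 - m"
    if "f y1 \<noteq> \<infinity>" "f y2 \<noteq> \<infinity>" for y1 y2
  proof -
    have h: "0 < (1/2::real)" "(1/2::real) < 1" by auto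
    note sc = strong_conv[OF hyp that h, of x, folded \<sigma>_def]
    have "m \<le> G x ((1 - 1/2) *\<^sub>R y1 + (1/2) *\<^sub>R y2)" using sc mle by blast
    moreover have "G x ((1 - 1/2) *\<^sub>R y1 + (1/2) *\<^sub>R y2) \<le> (1 - 1/2) * G x y1 + 1/2 * G x y2 - \<sigma>/2 * (1/2) * (1 - 1/2) * (norm (y1 - y2))\<^sup>2"
      using sc by blast
    moreover have "\<sigma>/2 * (1/2) * (1 - 1/2) * (norm (y1 - y2))\<^sup>2 = \<sigma>/8 * (norm (y1 - y2))\<^sup>2" by simp
    ultimately show ?thesis by (rule mid_arith)
  qed
  have "Cauchy ys"
  proof (rule metric_CauchyI)
    fix e :: real assume e: "e > 0"
    obtain N :: nat where N: "8/(\<sigma>*e\<^sup>2) < real N" using reals_Archimedean2 by blast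
    have iN: "inverse (real (Suc N)) < \<sigma>*e\<^sup>2/8"
    proof -
      have "8/(\<sigma>*e\<^sup>2) < real (Suc N)" using N by simp
      then have "8 < real (Suc N) * (\<sigma>*e\<^sup>2)" using s0 e by (simp add: field_simps)
      then show ?thesis using s0 e by (simp add: field_simps)
    qed
    show "\<exists>M. \<forall>i\<ge>M. \<forall>j\<ge>M. dist (ys i) (ys j) < e"
    proof (intro exI allI impI)
      fix i j assume ij: "N \<le> i" "N \<le> j"
      have "inverse (real (Suc i)) \<le> inverse (real (Suc N))" using ij by (simp add: le_imp_inverse_le)
      moreover have "inverse (real (Suc j)) \<le> inverse (real (Suc N))" using ij by (simp add: le_imp_inverse_le)
      ultimately have "\<sigma>/8 * (norm (ys i - ys j))\<^sup>2 < \<sigma>*e\<^sup>2/8"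
        using cauchy_arith[OF mid[OF ys(1) ys(1), of i j] ys(2)[of i] ys(2)[of j]] iN by blast
      then have "(norm (ys i - ys j))\<^sup>2 < e\<^sup>2" using s0 by (simp add: field_simps)
      then have "norm (ys i - ys j) < e" using e by (simp add: power_less_imp_less_base)
      then show "dist (ys i) (ys j) < e" by (simp add: dist_norm)
    qed
  qed
  then obtain p where p: "ys \<longlonglongrightarrow> p" using Cauchy_convergent_iff convergent_def by blast
  define b where "b n = m + inverse (real (Suc n)) - (norm (x - ys n))\<^sup>2 / (2 * \<mu>)" for n
  have fb: "f (ys n) \<le> ereal (b n)" for n
  proof -
    have "f (ys n) = ereal (real_of_ereal (f (ys n)))" using fin ys(1) by blast
    moreover have "real_of_ereal (f (ys n)) \<le> b n" using ys(2)[of n] unfolding b_def by simp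
    ultimately show ?thesis by (metis ereal_less_eq(3))
  qed
  have bl: "b \<longlonglongrightarrow> m + 0 - (norm (x - p))\<^sup>2 / (2 * \<mu>)"
    unfolding b_def using lam by (intro tendsto_intros p LIMSEQ_inverse_real_of_nat) auto
  have fp: "f p \<le> ereal (m - (norm (x - p))\<^sup>2 / (2 * \<mu>))" using lsc_seq[OF lsc p fb bl] by simp
  then have fp1: "f p \<noteq> \<infinity>" by auto
  have Fp: "real_of_ereal (f p) \<le> m - (norm (x - p))\<^sup>2 / (2 * \<mu>)"
    using fp fin[OF fp1] by (metis ereal_less_eq(3))
  then have Gp: "G x p \<le> m" by linarith
  show ?thesis
  proof (intro exI conjI allI impI)
    show "f p \<noteq> \<infinity>" by (rule fp1)
    fix z assume "f z \<noteq> \<infinity>"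
    then show "G x p \<le> G x z" using Gp mle[of z] by linarith
  qed
qed

lemma strong_opt:
  assumes hyp: "hypoconvex (1/lam) f" and fp: "f p \<noteq> \<infinity>" and pmin: "\<forall>z. f z \<noteq> \<infinity> \<longrightarrow> G x p \<le> G x z"
    and fz: "f z \<noteq> \<infinity>"
  shows "G x z \<ge> G x p + (1/\<mu> - 1/lam)/2 * (norm (z - p))\<^sup>2"
proof -
  define \<sigma> where "\<sigma> = 1/\<mu> - 1/lam"
  have s0: "\<sigma> > 0" using sigma_pos unfolding \<sigma>_def .
  define d where "d = (norm (z - p))\<^sup>2"
  define tt where "tt n = inverse (real (Suc n)) / 2" for n
  have step: "G x p + \<sigma>/2 * (1 - tt n) * d \<le> G x z" for n
  proof -
    have t: "0 < tt n" "tt n < 1" unfolding tt_def by (auto simp: field_simps)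
    note sc = strong_conv[OF hyp fp fz t, of x, folded \<sigma>_def]
    have c1: "G x p \<le> G x ((1 - tt n) *\<^sub>R p + tt n *\<^sub>R z)" using sc pmin by blast
    have c2: "G x ((1 - tt n) *\<^sub>R p + tt n *\<^sub>R z) \<le> (1 - tt n) * G x p + tt n * G x z - \<sigma> / 2 * tt n * (1 - tt n) * d"
      using sc unfolding d_def by (simp only: norm_minus_commute)
    show ?thesis by (rule opt_arith[OF c1 c2 t(1)])
  qed
  have "(\<lambda>n. G x p + \<sigma>/2 * (1 - tt n) * d) \<longlonglongrightarrow> G x p + \<sigma>/2 * (1 - 0/2) * d"
    unfolding tt_def by (intro tendsto_intros LIMSEQ_inverse_real_of_nat) auto
  moreover have "\<exists>N. \<forall>n\<ge>N. G x p + \<sigma>/2 * (1 - tt n) * d \<le> G x z" using step by blast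
  ultimately have "G x p + \<sigma>/2 * (1 - 0/2) * d \<le> G x z"
    by (rule LIMSEQ_le_const2)
  then show ?thesis unfolding \<sigma>_def d_def by simp
qed

lemma four_sq:
  fixes x y p q :: "'b::real_inner"
  shows "(norm (x - q))\<^sup>2 + (norm (y - p))\<^sup>2 - (norm (x - p))\<^sup>2 - (norm (y - q))\<^sup>2 = 2 * inner (x - y) (p - q)"
  by (simp add: power2_norm_eq_inner inner_diff_left inner_diff_right inner_commute algebra_simps)

lemma hyp_imp_coco:
  assumes hyp: "hypoconvex (1/lam) f" and al: "\<alpha> \<ge> 0"
    and gr: "\<forall>x. f x \<ge> ereal (- \<alpha> * (norm x)\<^sup>2 - \<beta> * norm x + \<nu>)"
  shows "\<exists>T. (\<forall>x. Prox \<mu> f x = {T x}) \<and> cocoercive ((lam - \<mu>) / lam) T"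
proof -
  define \<sigma> where "\<sigma> = 1/\<mu> - 1/lam"
  have s0: "\<sigma> > 0" using sigma_pos unfolding \<sigma>_def .
  have "\<forall>x. \<exists>p. f p \<noteq> \<infinity> \<and> (\<forall>z. f z \<noteq> \<infinity> \<longrightarrow> G x p \<le> G x z)"
    using prox_min_exists[OF hyp al gr] by blast
  then obtain T where T1: "\<And>x. f (T x) \<noteq> \<infinity>" and T2: "\<And>x. \<forall>z. f z \<noteq> \<infinity> \<longrightarrow> G x (T x) \<le> G x z"
    by metis
  have so: "G x z \<ge> G x (T x) + \<sigma>/2 * (norm (z - T x))\<^sup>2" if "f z \<noteq> \<infinity>" for x z
    using strong_opt[OF hyp T1 T2 that] unfolding \<sigma>_def .
  have prox: "Prox \<mu> f x = {T x}" for x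
  proof
    obtain d where d: "f (T x) = ereal d" using fin[OF T1[of x]] by blast
    have "f (T x) + ereal ((norm (x - T x))\<^sup>2 / (2 * \<mu>)) \<le> f z + ereal ((norm (x - z))\<^sup>2 / (2 * \<mu>))" for z
    proof (cases "f z = \<infinity>")
      case True then show ?thesis by simp
    next
      case False
      obtain c where c: "f z = ereal c" using fin[OF False] by blast
      have "G x (T x) \<le> G x z" using T2 False by blast
      then have "d + (norm (x - T x))\<^sup>2 / (2 * \<mu>) \<le> c + (norm (x - z))\<^sup>2 / (2 * \<mu>)"
        unfolding c d by simp
      then show ?thesis unfolding c d by simp
    qed
    then show "{T x} \<subseteq> Prox \<mu> f x" unfolding Prox_def by blast
    show "Prox \<mu> f x \<subseteq> {T x}"
    proof
      fix y assume "y \<in> Prox \<mu> f x"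
      then have y: "f y + ereal ((norm (x - y))\<^sup>2 / (2 * \<mu>)) \<le> f (T x) + ereal ((norm (x - T x))\<^sup>2 / (2 * \<mu>))"
        unfolding Prox_def by blast
      have fy: "f y \<noteq> \<infinity>"
      proof
        assume "f y = \<infinity>"
        then have "f y + ereal ((norm (x - y))\<^sup>2 / (2 * \<mu>)) = \<infinity>" by simp
        with y have "\<infinity> \<le> ereal (d + (norm (x - T x))\<^sup>2 / (2 * \<mu>))" unfolding d by simp
        then show False by simp
      qed
      obtain c where c: "f y = ereal c" using fin[OF fy] by blast
      have "c + (norm (x - y))\<^sup>2 / (2 * \<mu>) \<le> d + (norm (x - T x))\<^sup>2 / (2 * \<mu>)" using y unfolding c d by simp
      then have "G x y \<le> G x (T x)" unfolding c d by simp
      moreover have "G x y \<ge> G x (T x) + \<sigma>/2 * (norm (y - T x))\<^sup>2" using so[OF fy] .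
      ultimately have "\<sigma>/2 * (norm (y - T x))\<^sup>2 \<le> 0" by linarith
      then have "(norm (y - T x))\<^sup>2 \<le> 0" using s0 by (simp add: mult_le_0_iff)
      then show "y \<in> {T x}" by simp
    qed
  qed
  have "cocoercive ((lam - \<mu>) / lam) T"
    unfolding cocoercive_def
  proof (intro allI)
    fix x y
    have a: "G x (T y) \<ge> G x (T x) + \<sigma>/2 * (norm (T y - T x))\<^sup>2" using so[OF T1] .
    have b: "G y (T x) \<ge> G y (T y) + \<sigma>/2 * (norm (T x - T y))\<^sup>2" using so[OF T1] .
    have c: "(norm (T y - T x)) = norm (T x - T y)" by (rule norm_minus_commute)
    define Q where "Q = (norm (x - T y))\<^sup>2 + (norm (y - T x))\<^sup>2 - (norm (x - T x))\<^sup>2 - (norm (y - T y))\<^sup>2"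
    have "Q / (2 * \<mu>) \<ge> \<sigma> * (norm (T x - T y))\<^sup>2"
    proof -
      have "Q / (2 * \<mu>) = (norm (x - T y))\<^sup>2 / (2 * \<mu>) + (norm (y - T x))\<^sup>2 / (2 * \<mu>) - (norm (x - T x))\<^sup>2 / (2 * \<mu>) - (norm (y - T y))\<^sup>2 / (2 * \<mu>)"
        unfolding Q_def by (simp add: diff_divide_distrib add_divide_distrib)
      then show ?thesis using a b unfolding c by linarith
    qed
    moreover have "Q = 2 * inner (x - y) (T x - T y)" unfolding Q_def by (rule four_sq)
    ultimately have "inner (x - y) (T x - T y) / \<mu> \<ge> \<sigma> * (norm (T x - T y))\<^sup>2" by simp
    then have "inner (x - y) (T x - T y) \<ge> \<mu> * (\<sigma> * (norm (T x - T y))\<^sup>2)"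
      using lam by (simp add: field_simps)
    moreover have "\<mu> * \<sigma> = (lam - \<mu>) / lam" unfolding \<sigma>_def using lam by (simp add: field_simps)
    ultimately show "(lam - \<mu>) / lam * (norm (T x - T y))\<^sup>2 \<le> inner (x - y) (T x - T y)"
      by (simp add: mult.assoc[symmetric])
  qed
  then show ?thesis using prox by blast
qed

lemma contr_arith:
  fixes e g ip na n Q \<rho> :: real
  assumes "0<e" "e<1" "0<g" "g<1" "ip \<ge> e * n\<^sup>2" "na \<le> n / g" "na \<ge> 0" "n \<ge> 0"
    "Q = n\<^sup>2 - 2 * \<rho> * ip + \<rho>\<^sup>2 * na\<^sup>2" "\<rho> = e * g\<^sup>2"
  shows "Q \<le> ((1 - e\<^sup>2 * g\<^sup>2 / 2) * n)\<^sup>2"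
proof -
  have r0: "\<rho> \<ge> 0" using assms by simp
  have "\<rho> * ip \<ge> \<rho> * (e * n\<^sup>2)" using assms(5) r0 by (rule mult_left_mono)
  moreover have "na\<^sup>2 \<le> (n / g)\<^sup>2" using assms(6,7) by (rule power_mono)
  then have "\<rho>\<^sup>2 * na\<^sup>2 \<le> \<rho>\<^sup>2 * (n / g)\<^sup>2" by (simp add: mult_left_mono)
  moreover have "\<rho>\<^sup>2 * (n / g)\<^sup>2 = e\<^sup>2 * g\<^sup>2 * n\<^sup>2" using assms(3) unfolding assms(10)
    by (simp add: power2_eq_square field_simps)
  moreover have "\<rho> * (e * n\<^sup>2) = e\<^sup>2 * g\<^sup>2 * n\<^sup>2" unfolding assms(10) by (simp add: power2_eq_square)
  ultimately have "Q \<le> n\<^sup>2 - e\<^sup>2 * g\<^sup>2 * n\<^sup>2" using assms(9) by linarith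
  also have "\<dots> \<le> ((1 - e\<^sup>2 * g\<^sup>2 / 2) * n)\<^sup>2"
  proof -
    have "((1 - e\<^sup>2 * g\<^sup>2 / 2) * n)\<^sup>2 = n\<^sup>2 - e\<^sup>2 * g\<^sup>2 * n\<^sup>2 + (e\<^sup>2 * g\<^sup>2 / 2)\<^sup>2 * n\<^sup>2"
      by (simp add: power2_eq_square algebra_simps)
    moreover have "(e\<^sup>2 * g\<^sup>2 / 2)\<^sup>2 * n\<^sup>2 \<ge> 0" by simp
    ultimately show ?thesis by linarith
  qed
  finally show ?thesis .
qed
lemma r_arith:
  fixes N r K0 K1 M :: real
  assumes N: "N \<ge> 1" and r: "r \<ge> 0" and K1: "K1 \<ge> 0" and h: "N * r\<^sup>2 \<le> K0 + K1 * r"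
    and M: "K0 \<le> M" "0 \<le> M"
  shows "r\<^sup>2 \<le> 2 * (M + K1\<^sup>2) / N"
proof -
  have "0 \<le> (N * r - K1)\<^sup>2" by simp
  also have "(N * r - K1)\<^sup>2 = N * (N * r\<^sup>2 - 2 * K1 * r) + K1\<^sup>2" by (simp add: power2_eq_square algebra_simps)
  finally have "0 \<le> N * (N * r\<^sup>2 - 2 * K1 * r + K1\<^sup>2 / N)" using N by (simp add: algebra_simps)
  then have am: "0 \<le> N * r\<^sup>2 - 2 * K1 * r + K1\<^sup>2 / N" using N by (simp add: zero_le_mult_iff)
  have "K1\<^sup>2 / N \<le> K1\<^sup>2 / 1" using N by (intro divide_left_mono) auto
  then have k: "K1\<^sup>2 / N \<le> K1\<^sup>2" by simp
  define A where "A = N * r\<^sup>2"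
  define B where "B = K1 * r"
  define C where "C = K1\<^sup>2 / N"
  define D where "D = K1\<^sup>2"
  have "0 \<le> A - 2 * B + C" using am unfolding A_def B_def C_def by (simp add: algebra_simps)
  moreover have "A \<le> K0 + B" using h unfolding A_def B_def .
  moreover have "C \<le> D" "0 \<le> D" using k unfolding C_def D_def by auto
  ultimately have "A \<le> 2 * (M + D)" using M by (smt (verit))
  then show ?thesis using N unfolding A_def D_def by (simp add: field_simps)
qed
lemma cancel_aux: "(a::real) * n \<le> b * n \<Longrightarrow> n > 0 \<Longrightarrow> a \<le> b"
  by (simp add: mult_le_cancel_right_pos)

lemma div_aux: "(g::real) > 0 \<Longrightarrow> g * n \<le> m \<Longrightarrow> n \<le> m / g"
  by (simp add: pos_le_divide_eq mult.commute)

definition gam :: real where "gam = (lam - \<mu>)/lam"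

lemma gam_pos: "gam > 0" "gam < 1" using lam by (auto simp: field_simps gam_def)

context
  fixes T :: "'a \<Rightarrow> 'a"
  assumes Tprox: "\<forall>x. Prox \<mu> f x = {T x}" and co: "cocoercive ((lam - \<mu>) / lam) T"
begin

abbreviation "H y \<equiv> \<mu> * real_of_ereal (f y) + (norm y)\<^sup>2 / 2"
abbreviation "phi x \<equiv> inner x (T x) - H (T x)"

lemma T_min: "f (T x) + ereal ((norm (x - T x))\<^sup>2 / (2 * \<mu>)) \<le> f z + ereal ((norm (x - z))\<^sup>2 / (2 * \<mu>))"
  using Tprox unfolding Prox_def by blast

lemma T_fin: "f (T x) \<noteq> \<infinity>"
proof
  assume a: "f (T x) = \<infinity>"
  obtain z0 where z0: "f z0 \<noteq> \<infinity>" using proper unfolding proper_fun_def by blast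
  obtain c where c: "f z0 = ereal c" using fin[OF z0] by blast
  have "f (T x) + ereal ((norm (x - T x))\<^sup>2 / (2 * \<mu>)) = \<infinity>" using a by simp
  with T_min[of x z0] show False unfolding c by simp
qed

lemma P1:
  assumes fz: "f z \<noteq> \<infinity>"
  shows "H (T x) - inner x (T x) \<le> H z - inner x z"
proof -
  obtain c where c: "f z = ereal c" using fin[OF fz] by blast
  obtain d where d: "f (T x) = ereal d" using fin[OF T_fin[of x]] by blast
  have "d + (norm (x - T x))\<^sup>2 / (2 * \<mu>) \<le> c + (norm (x - z))\<^sup>2 / (2 * \<mu>)"
    using T_min[of x z] unfolding c d by simp
  then have "\<mu> * (d + (norm (x - T x))\<^sup>2 / (2 * \<mu>)) \<le> \<mu> * (c + (norm (x - z))\<^sup>2 / (2 * \<mu>))"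
    using lam by (simp add: mult_left_mono)
  then have "\<mu> * d + (norm (x - T x))\<^sup>2 / 2 \<le> \<mu> * c + (norm (x - z))\<^sup>2 / 2"
    using lam by (simp add: distrib_left)
  moreover have "(norm (x - T x))\<^sup>2 / 2 = (norm x)\<^sup>2 / 2 - inner x (T x) + (norm (T x))\<^sup>2 / 2"
    unfolding nd2 by (simp add: field_simps)
  moreover have "(norm (x - z))\<^sup>2 / 2 = (norm x)\<^sup>2 / 2 - inner x z + (norm z)\<^sup>2 / 2"
    unfolding nd2 by (simp add: field_simps)
  ultimately show ?thesis unfolding c d by simp
qed

lemma FY:
  assumes fz: "f z \<noteq> \<infinity>"
  shows "H z \<ge> inner x z - phi x"
  using P1[OF fz, of x] by simp

lemma lip: "gam * norm (T x - T y) \<le> norm (x - y)"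
proof -
  have "gam * (norm (T x - T y))\<^sup>2 \<le> inner (x - y) (T x - T y)" using co unfolding cocoercive_def gam_def by blast
  also have "\<dots> \<le> norm (x - y) * norm (T x - T y)" by (rule norm_cauchy_schwarz)
  finally have "(gam * norm (T x - T y)) * norm (T x - T y) \<le> norm (x - y) * norm (T x - T y)"
    by (simp add: power2_eq_square mult.assoc)
  then show ?thesis
  proof (cases "norm (T x - T y) = 0")
    case True then show ?thesis by simp
  next
    case False
    then have "norm (T x - T y) > 0" by simp
    with cancel_aux[OF \<open>(gam * norm (T x - T y)) * norm (T x - T y) \<le> norm (x - y) * norm (T x - T y)\<close>]
    show ?thesis by blast
  qed
qed

lemma D0: "phi (x + w) - phi x - inner w (T x) \<le> inner w (T (x + w) - T x)"
proof -
  have "H (T (x + w)) \<ge> inner x (T (x + w)) - phi x" by (rule FY[OF T_fin])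
  moreover have "inner (x + w) (T (x + w)) = inner x (T (x + w)) + inner w (T (x + w))" by (simp add: inner_add_left)
  moreover have "inner w (T (x + w) - T x) = inner w (T (x + w)) - inner w (T x)" by (simp add: inner_diff_right)
  ultimately show ?thesis by linarith
qed

lemma D1: "inner w (T (x + w) - T x) \<le> (norm w)\<^sup>2 / gam"
proof -
  have "inner w (T (x + w) - T x) \<le> norm w * norm (T (x + w) - T x)" by (rule norm_cauchy_schwarz)
  also have "norm (T (x + w) - T x) \<le> norm w / gam"
    using div_aux[OF gam_pos(1) lip[of "x + w" x]] by simp
  then have "norm w * norm (T (x + w) - T x) \<le> norm w * (norm w / gam)"
    by (rule mult_left_mono) simp
  finally show ?thesis by (simp add: power2_eq_square)
qed

abbreviation "Dd x w \<equiv> phi (x + w) - phi x - inner w (T x)"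

lemma halves: "(1/2::real) *\<^sub>R w + (1/2) *\<^sub>R w = (w::'b::real_vector)"
  using scaleR_add_left[of "1/2::real" "1/2" w] by simp

lemma Dk: "Dd x w \<le> (1/(2*gam) + (1/(2*gam)) * (1/2)^k) * (norm w)\<^sup>2"
proof (induction k arbitrary: x w)
  case 0
  have "Dd x w \<le> (norm w)\<^sup>2 / gam" using D0[of x w] D1[of w x] by linarith
  moreover have "(1/(2*gam) + (1/(2*gam)) * (1/2)^0) * (norm w)\<^sup>2 = (norm w)\<^sup>2 / gam" by simp
  ultimately show ?case by simp
next
  case (Suc k)
  define h where "h = (1/2::real) *\<^sub>R w"
  define c where "c = 1/(2*gam) + (1/(2*gam)) * (1/2::real)^k"
  have hh: "x + h + h = x + w" unfolding h_def using halves[of w] by (simp add: add.assoc)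
  have i1: "inner w (T x) = inner h (T x) + inner h (T x)" unfolding h_def
    by (metis halves inner_add_left)
  have i2: "inner h (T (x + h) - T x) = inner h (T (x + h)) - inner h (T x)" by (simp add: inner_diff_right)
  have p: "phi (x + h + h) = phi (x + w)" by (simp only: hh)
  have id: "Dd x w = Dd x h + Dd (x + h) h + inner h (T (x + h) - T x)"
    using p i1 i2 by linarith
  have b1: "Dd x h \<le> c * (norm h)\<^sup>2" using Suc.IH unfolding c_def .
  have b2: "Dd (x + h) h \<le> c * (norm h)\<^sup>2" using Suc.IH unfolding c_def .
  have b3: "inner h (T (x + h) - T x) \<le> (norm h)\<^sup>2 / gam" by (rule D1)
  have nh: "(norm h)\<^sup>2 = (norm w)\<^sup>2 / 4" unfolding h_def by (simp add: power2_eq_square)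
  have "Dd x w \<le> 2 * c * (norm h)\<^sup>2 + (norm h)\<^sup>2 / gam" using id b1 b2 b3 by linarith
  also have "\<dots> = (1/(2*gam) + (1/(2*gam)) * (1/2)^(Suc k)) * (norm w)\<^sup>2"
    unfolding nh c_def by (simp add: field_simps)
  finally show ?case .
qed

lemma descent: "Dd x w \<le> (norm w)\<^sup>2 / (2 * gam)"
proof -
  have "(\<lambda>k. (1/(2*gam) + (1/(2*gam)) * (1/2::real)^k) * (norm w)\<^sup>2) \<longlonglongrightarrow> (1/(2*gam) + (1/(2*gam)) * 0) * (norm w)\<^sup>2"
    by (intro tendsto_intros LIMSEQ_power_zero) simp
  moreover have "\<exists>N. \<forall>k\<ge>N. Dd x w \<le> (1/(2*gam) + (1/(2*gam)) * (1/2::real)^k) * (norm w)\<^sup>2"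
    using Dk by blast
  ultimately have "Dd x w \<le> (1/(2*gam) + (1/(2*gam)) * 0) * (norm w)\<^sup>2"
    by (rule LIMSEQ_le_const)
  then show ?thesis by simp
qed

lemma strong_sub:
  assumes fz: "f z \<noteq> \<infinity>"
  shows "H z \<ge> H (T x) + inner x (z - T x) + gam/2 * (norm (z - T x))\<^sup>2"
proof -
  define v where "v = T x"
  define dd where "dd = z - v"
  define w where "w = gam *\<^sub>R dd"
  have g0: "gam > 0" by (rule gam_pos)
  have a: "H z \<ge> inner (x + w) z - phi (x + w)" by (rule FY[OF fz])
  have b: "phi (x + w) \<le> phi x + inner w v + (norm w)\<^sup>2 / (2 * gam)"
    using descent[of x w] unfolding v_def by linarith
  have c: "inner (x + w) z = inner x z + gam * inner dd z" unfolding w_def by (simp add: inner_add_left)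
  have d: "inner w v = gam * inner dd v" unfolding w_def by simp
  have e: "(norm w)\<^sup>2 / (2 * gam) = gam / 2 * (norm dd)\<^sup>2"
    unfolding w_def using g0 by (simp add: power2_eq_square field_simps)
  have f: "gam * inner dd z - gam * inner dd v = gam * (norm dd)\<^sup>2"
    unfolding dd_def by (simp add: power2_norm_eq_inner inner_diff_left inner_diff_right algebra_simps)
  have g: "inner x (z - T x) = inner x z - inner x v" unfolding v_def by (simp add: inner_diff_right)
  show ?thesis using a b c d e f g unfolding v_def[symmetric] dd_def[symmetric] by linarith
qed

lemma surj_aux:
  assumes e: "0 < e" "e < 1"
  shows "\<exists>x. e *\<^sub>R x + (1 - e) *\<^sub>R T x = u"
proof -
  define A where "A x = e *\<^sub>R x + (1 - e) *\<^sub>R T x" for x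
  define \<rho> where "\<rho> = e * gam\<^sup>2"
  define Gm where "Gm x = x - \<rho> *\<^sub>R (A x - u)" for x
  define c where "c = 1 - e\<^sup>2 * gam\<^sup>2 / 2"
  have g: "0 < gam" "gam < 1" by (rule gam_pos)+
  have eg: "e\<^sup>2 * gam\<^sup>2 < 1"
  proof -
    have a: "e\<^sup>2 < 1" using mult_strict_mono[of e 1 e 1] e by (simp add: power2_eq_square)
    have b: "gam\<^sup>2 < 1" using mult_strict_mono[of gam 1 gam 1] g by (simp add: power2_eq_square)
    show ?thesis using mult_strict_mono[of "e\<^sup>2" 1 "gam\<^sup>2" 1] a b by simp
  qed
  have c0: "0 \<le> c" "c < 1" unfolding c_def using eg e g by auto
  have contr: "dist (Gm x) (Gm y) \<le> c * dist x y" for x y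
  proof -
    define d where "d = x - y"
    define td where "td = T x - T y"
    define ad where "ad = A x - A y"
    have ad: "ad = e *\<^sub>R d + (1 - e) *\<^sub>R td" unfolding ad_def A_def d_def td_def by (simp add: scaleR_diff_right)
    have gd: "Gm x - Gm y = d - \<rho> *\<^sub>R ad" unfolding Gm_def d_def ad_def by (simp add: scaleR_diff_right)
    have cot: "inner d td \<ge> gam * (norm td)\<^sup>2" using co unfolding cocoercive_def gam_def d_def td_def by blast
    then have "inner d td \<ge> 0" using g by (smt (verit) mult_nonneg_nonneg zero_le_power2)
    then have "(1 - e) * inner d td \<ge> 0" using e by simp
    moreover have "inner d ad = e * (norm d)\<^sup>2 + (1 - e) * inner d td"
      unfolding ad by (simp add: inner_add_right power2_norm_eq_inner)
    ultimately have ip: "inner d ad \<ge> e * (norm d)\<^sup>2" by linarith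
    have ntd: "norm td \<le> norm d / gam" unfolding td_def d_def by (rule div_aux[OF g(1) lip])
    have "norm ad \<le> norm (e *\<^sub>R d) + norm ((1 - e) *\<^sub>R td)" unfolding ad by (rule norm_triangle_ineq)
    also have "\<dots> = e * norm d + (1 - e) * norm td" using e by (simp add: abs_of_pos)
    also have "\<dots> \<le> e * (norm d / gam) + (1 - e) * (norm d / gam)"
    proof -
      have "gam * (e * norm d) \<le> e * norm d" by (rule mult_left_le_one_le) (use g e in auto)
      then have "e * norm d / gam \<ge> e * norm d" using div_aux[OF g(1)] by blast
      then have "e * norm d \<le> e * (norm d / gam)" by simp
      moreover have "(1 - e) * norm td \<le> (1 - e) * (norm d / gam)" using ntd e by (intro mult_left_mono) auto
      ultimately show ?thesis by linarith
    qed
    also have "\<dots> = (e + (1 - e)) * (norm d / gam)" by (rule distrib_right[symmetric])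
    also have "\<dots> = norm d / gam" by simp
    finally have nad: "norm ad \<le> norm d / gam" .
    have Q: "(norm (d - \<rho> *\<^sub>R ad))\<^sup>2 = (norm d)\<^sup>2 - 2 * \<rho> * inner d ad + \<rho>\<^sup>2 * (norm ad)\<^sup>2" by (rule nd2s)
    have "(norm (d - \<rho> *\<^sub>R ad))\<^sup>2 \<le> ((1 - e\<^sup>2 * gam\<^sup>2 / 2) * norm d)\<^sup>2"
      by (rule contr_arith[OF e g ip nad norm_ge_zero norm_ge_zero Q \<rho>_def])
    then have "(norm (d - \<rho> *\<^sub>R ad))\<^sup>2 \<le> (c * norm d)\<^sup>2" unfolding c_def .
    then have "norm (d - \<rho> *\<^sub>R ad) \<le> c * norm d"
      by (rule power2_le_imp_le) (use c0 in simp)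
    then show ?thesis unfolding dist_norm gd d_def .
  qed
  obtain x where x: "Gm x = x" using banach_fix_type[OF c0 allI[OF allI[OF contr]]] by blast
  have "\<rho> > 0" unfolding \<rho>_def using e g by simp
  then have "A x = u" using x unfolding Gm_def by simp
  then show ?thesis unfolding A_def by blast
qed

lemma core:
  assumes fa: "f a \<noteq> \<infinity>" and fb: "f b \<noteq> \<infinity>" and tau: "0 < \<tau>" "\<tau> < 1"
  shows "f ((1 - \<tau>) *\<^sub>R a + \<tau> *\<^sub>R b) \<le> ereal ((((1 - \<tau>) * H a + \<tau> * H b - gam/2 * \<tau> * (1 - \<tau>) * (norm (a - b))\<^sup>2)
        - (norm ((1 - \<tau>) *\<^sub>R a + \<tau> *\<^sub>R b))\<^sup>2 / 2) / \<mu>)"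
proof -
  define u where "u = (1 - \<tau>) *\<^sub>R a + \<tau> *\<^sub>R b"
  define R where "R = (1 - \<tau>) * H a + \<tau> * H b - gam/2 * \<tau> * (1 - \<tau>) * (norm (a - b))\<^sup>2"
  define e where "e n = 1 / (real n + 2)" for n
  have e01: "0 < e n" "e n < 1" for n unfolding e_def by auto
  have "\<forall>n. \<exists>x. e n *\<^sub>R x + (1 - e n) *\<^sub>R T x = u" using surj_aux e01 by blast
  then obtain xs where xs: "\<And>n. e n *\<^sub>R xs n + (1 - e n) *\<^sub>R T (xs n) = u" by metis
  define vs where "vs n = T (xs n)" for n
  define r where "r n = norm (u - vs n)" for n
  define A0 where "A0 = H (T 0)"
  have g: "0 < gam" "gam < 1" by (rule gam_pos)+
  have key: "H (vs n) \<le> R + norm u * r n - (real n + 1) * (r n)\<^sup>2" for n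
  proof -
    define x where "x = xs n"
    define v where "v = vs n"
    have s1: "H a \<ge> H v + inner x (a - v) + gam/2 * (norm (a - v))\<^sup>2"
      using strong_sub[OF fa, of x] unfolding v_def vs_def x_def .
    have s2: "H b \<ge> H v + inner x (b - v) + gam/2 * (norm (b - v))\<^sup>2"
      using strong_sub[OF fb, of x] unfolding v_def vs_def x_def .
    have cs: "(norm (v - u))\<^sup>2 = (1 - \<tau>) * (norm (a - v))\<^sup>2 + \<tau> * (norm (b - v))\<^sup>2 - \<tau> * (1 - \<tau>) * (norm (a - b))\<^sup>2"
      unfolding u_def conv_sq2 by (simp add: norm_minus_commute)
    have "u - v = (1 - \<tau>) *\<^sub>R (a - v) + \<tau> *\<^sub>R (b - v)" unfolding u_def by (simp add: algebra_simps)
    then have lin: "inner x (u - v) = (1 - \<tau>) * inner x (a - v) + \<tau> * inner x (b - v)"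
      by (simp add: inner_add_right)
    have m1: "(1 - \<tau>) * (H v + inner x (a - v) + gam/2 * (norm (a - v))\<^sup>2) \<le> (1 - \<tau>) * H a"
      using s1 tau by (intro mult_left_mono) auto
    have m2: "\<tau> * (H v + inner x (b - v) + gam/2 * (norm (b - v))\<^sup>2) \<le> \<tau> * H b"
      using s2 tau by (intro mult_left_mono) auto
    have hv: "H v \<le> R - inner x (u - v) - gam/2 * (norm (v - u))\<^sup>2"
    proof -
      have "(1 - \<tau>) * (H v + inner x (a - v) + gam/2 * (norm (a - v))\<^sup>2) + \<tau> * (H v + inner x (b - v) + gam/2 * (norm (b - v))\<^sup>2)
          = H v + ((1 - \<tau>) * inner x (a - v) + \<tau> * inner x (b - v)) + gam/2 * ((1 - \<tau>) * (norm (a - v))\<^sup>2 + \<tau> * (norm (b - v))\<^sup>2)"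
        by (simp add: field_simps)
      also have "\<dots> = H v + inner x (u - v) + gam/2 * ((norm (v - u))\<^sup>2 + \<tau> * (1 - \<tau>) * (norm (a - b))\<^sup>2)"
        unfolding lin cs by simp
      also have "\<dots> = H v + inner x (u - v) + gam/2 * (norm (v - u))\<^sup>2 + gam/2 * \<tau> * (1 - \<tau>) * (norm (a - b))\<^sup>2"
        by (simp add: field_simps)
      finally have "H v + inner x (u - v) + gam/2 * (norm (v - u))\<^sup>2 + gam/2 * \<tau> * (1 - \<tau>) * (norm (a - b))\<^sup>2 \<le> (1 - \<tau>) * H a + \<tau> * H b"
        using m1 m2 by linarith
      then show ?thesis unfolding R_def by linarith
    qed
    have uv: "u - v = e n *\<^sub>R (x - v)"
    proof -
      have "u = e n *\<^sub>R x + (1 - e n) *\<^sub>R v" using xs[of n] unfolding x_def v_def vs_def by simp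
      then show ?thesis by (simp add: algebra_simps)
    qed
    then have xv: "x - v = (real n + 2) *\<^sub>R (u - v)" using e01[of n] unfolding e_def by simp
    have i1: "inner x (u - v) = inner v (u - v) + inner (x - v) (u - v)" by (simp add: inner_diff_left)
    have i2: "inner (x - v) (u - v) = (real n + 2) * (r n)\<^sup>2"
      by (subst xv) (simp add: r_def v_def power2_norm_eq_inner)
    have i3: "inner v (u - v) = inner u (u - v) - (r n)\<^sup>2"
      unfolding r_def v_def by (simp add: power2_norm_eq_inner inner_diff_left)
    have i4: "inner u (u - v) \<ge> - (norm u * r n)"
    proof -
      have "\<bar>inner u (u - v)\<bar> \<le> norm u * norm (u - v)" by (rule Cauchy_Schwarz_ineq2)
      then show ?thesis unfolding r_def v_def by linarith
    qed
    have gv: "gam/2 * (norm (v - u))\<^sup>2 \<ge> 0" using g by simp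
    have "H v \<le> R + norm u * r n - (real n + 1) * (r n)\<^sup>2"
    proof -
      have "(real n + 2) * (r n)\<^sup>2 = (real n + 1) * (r n)\<^sup>2 + (r n)\<^sup>2" by (simp add: algebra_simps)
      then show ?thesis using hv i1 i2 i3 i4 gv by linarith
    qed
    then show ?thesis unfolding v_def .
  qed
  have low: "H (vs n) \<ge> A0" for n
  proof -
    have "H (vs n) \<ge> H (T 0) + inner 0 (vs n - T 0) + gam/2 * (norm (vs n - T 0))\<^sup>2"
      unfolding vs_def by (rule strong_sub[OF T_fin])
    moreover have "gam/2 * (norm (vs n - T 0))\<^sup>2 \<ge> 0" using g by simp
    ultimately show ?thesis unfolding A0_def by simp
  qed
  define C where "C = 2 * (max (R - A0) 0 + (norm u)\<^sup>2)"
  have rb: "(r n)\<^sup>2 \<le> C * inverse (real (Suc n))" for n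
  proof -
    have "(real n + 1) * (r n)\<^sup>2 \<le> (R - A0) + norm u * r n" using key[of n] low[of n] by linarith
    then have "(r n)\<^sup>2 \<le> C / (real n + 1)" unfolding C_def
      by (intro r_arith) (auto simp: r_def)
    then show ?thesis by (simp add: divide_inverse add.commute)
  qed
  have r0: "r \<longlonglongrightarrow> 0"
  proof (rule tendsto_sandwich[of "\<lambda>n. 0" _ _ "\<lambda>n. sqrt (C * inverse (real (Suc n)))"])
    show "\<forall>\<^sub>F n in sequentially. 0 \<le> r n" by (simp add: r_def)
    show "\<forall>\<^sub>F n in sequentially. r n \<le> sqrt (C * inverse (real (Suc n)))"
      using rb by (simp add: real_le_rsqrt)
    show "(\<lambda>n. 0) \<longlonglongrightarrow> (0::real)" by simp
    have "(\<lambda>n. sqrt (C * inverse (real (Suc n)))) \<longlonglongrightarrow> sqrt (C * 0)"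
      by (intro tendsto_intros LIMSEQ_inverse_real_of_nat)
    then show "(\<lambda>n. sqrt (C * inverse (real (Suc n)))) \<longlonglongrightarrow> 0" by simp
  qed
  have vu: "vs \<longlonglongrightarrow> u"
  proof -
    have "(\<lambda>n. norm (vs n - u)) \<longlonglongrightarrow> 0" using r0 unfolding r_def by (simp add: norm_minus_commute)
    then have "(\<lambda>n. vs n - u) \<longlonglongrightarrow> 0" by (simp add: tendsto_norm_zero_iff)
    then show ?thesis by (simp add: LIM_zero_iff)
  qed
  define bb where "bb n = (R + norm u * r n - (norm (vs n))\<^sup>2 / 2) / \<mu>" for n
  have fbb: "f (vs n) \<le> ereal (bb n)" for n
  proof -
    obtain c where c: "f (vs n) = ereal c" using fin[OF T_fin] unfolding vs_def by blast
    have "(real n + 1) * (r n)\<^sup>2 \<ge> 0" by simp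
    moreover have "\<mu> * c + (norm (vs n))\<^sup>2 / 2 \<le> R + norm u * r n - (real n + 1) * (r n)\<^sup>2" using key[of n] unfolding c by simp
    ultimately have "\<mu> * c + (norm (vs n))\<^sup>2 / 2 \<le> R + norm u * r n" by linarith
    then have "\<mu> * c \<le> R + norm u * r n - (norm (vs n))\<^sup>2 / 2" by linarith
    then have "c \<le> bb n" unfolding bb_def using lam by (simp add: field_simps)
    then show ?thesis unfolding c by simp
  qed
  have bl: "bb \<longlonglongrightarrow> (R + norm u * 0 - (norm u)\<^sup>2 / 2) / \<mu>"
    unfolding bb_def by (intro tendsto_intros r0 vu) (use lam in auto)
  have "f u \<le> ereal ((R + norm u * 0 - (norm u)\<^sup>2 / 2) / \<mu>)" by (rule lsc_seq[OF lsc vu fbb bl])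
  then show ?thesis unfolding u_def R_def by simp
qed

lemma coco_hyp: "hypoconvex (1/lam) f"
  unfolding hypoconvex_def
proof (intro allI impI)
  fix a b :: 'a and \<tau> :: real
  assume t: "0 < \<tau> \<and> \<tau> < 1"
  have nm: "f y \<noteq> -\<infinity>" for y using proper unfolding proper_fun_def by blast
  show "f ((1 - \<tau>) *\<^sub>R a + \<tau> *\<^sub>R b) \<le> ereal (1 - \<tau>) * f a + ereal \<tau> * f b + ereal (1 / lam / 2 * \<tau> * (1 - \<tau>) * (norm (a - b))\<^sup>2)"
  proof (cases "f a = \<infinity> \<or> f b = \<infinity>")
    case True
    have "ereal (1 - \<tau>) * f a + ereal \<tau> * f b = \<infinity>"
      using True t nm[of a] nm[of b] by (cases "f a"; cases "f b") auto
    then have e: "ereal (1 - \<tau>) * f a + ereal \<tau> * f b + ereal (1 / lam / 2 * \<tau> * (1 - \<tau>) * (norm (a - b))\<^sup>2) = \<infinity>"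
      by simp
    show ?thesis unfolding e by simp
  next
    case False
    then have fa: "f a \<noteq> \<infinity>" and fb: "f b \<noteq> \<infinity>" by auto
    obtain ca where ca: "f a = ereal ca" using fin[OF fa] by blast
    obtain cb where cb: "f b = ereal cb" using fin[OF fb] by blast
    note cr = core[OF fa fb, of \<tau>]
    have eq: "(((1 - \<tau>) * H a + \<tau> * H b - gam/2 * \<tau> * (1 - \<tau>) * (norm (a - b))\<^sup>2)
        - (norm ((1 - \<tau>) *\<^sub>R a + \<tau> *\<^sub>R b))\<^sup>2 / 2) / \<mu>
      = (1 - \<tau>) * ca + \<tau> * cb + 1 / lam / 2 * \<tau> * (1 - \<tau>) * (norm (a - b))\<^sup>2"
      unfolding ca cb conv_sq gam_def using lam by (simp add: field_simps)
    have "f ((1 - \<tau>) *\<^sub>R a + \<tau> *\<^sub>R b) \<le> ereal ((1 - \<tau>) * ca + \<tau> * cb + 1 / lam / 2 * \<tau> * (1 - \<tau>) * (norm (a - b))\<^sup>2)"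
      using cr t unfolding eq by simp
    then show ?thesis unfolding ca cb by simp
  qed
qed

end

end

theorem theorem6p4:
  fixes f :: "'a::{real_inner, complete_space} \<Rightarrow> ereal"
    and lam \<mu> \<alpha> \<beta> \<nu> :: real
  assumes "proper_fun f" and "lsc f"
    and "\<alpha> \<ge> 0"
    and "\<forall>x. f x \<ge> ereal (- \<alpha> * (norm x)\<^sup>2 - \<beta> * norm x + \<nu>)"
    and "lam > 0" and "0 < \<mu>" and "\<mu> < lam"
  shows "(hypoconvex (1 / lam) f
            \<longleftrightarrow> (\<exists>T. (\<forall>x. Prox \<mu> f x = {T x})
                     \<and> conically_nonexpansive (lam / (2 * (lam - \<mu>))) (\<lambda>x. x - T x)))
       \<and> (hypoconvex (1 / lam) f
            \<longleftrightarrow> (\<exists>T. (\<forall>x. Prox \<mu> f x = {T x}) \<and> cocoercive ((lam - \<mu>) / lam) T))"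
proof -
  have P: "hypoconvex (1 / lam) f \<longleftrightarrow> (\<exists>T. (\<forall>x. Prox \<mu> f x = {T x}) \<and> cocoercive ((lam - \<mu>) / lam) T)"
  proof
    assume h: "hypoconvex (1 / lam) f"
    show "\<exists>T. (\<forall>x. Prox \<mu> f x = {T x}) \<and> cocoercive ((lam - \<mu>) / lam) T"
      by (rule hyp_imp_coco[OF assms(1,2,5,6,7) h assms(3,4)])
  next
    assume "\<exists>T. (\<forall>x. Prox \<mu> f x = {T x}) \<and> cocoercive ((lam - \<mu>) / lam) T"
    then obtain T where T1: "\<forall>x. Prox \<mu> f x = {T x}" and T2: "cocoercive ((lam - \<mu>) / lam) T" by blast
    show "hypoconvex (1 / lam) f" by (rule coco_hyp[OF assms(1,2,5,6,7) T1 T2])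
  qed
  have Q: "(\<exists>T. (\<forall>x. Prox \<mu> f x = {T x}) \<and> conically_nonexpansive (lam / (2 * (lam - \<mu>))) (\<lambda>x. x - T x))
     \<longleftrightarrow> (\<exists>T. (\<forall>x. Prox \<mu> f x = {T x}) \<and> cocoercive ((lam - \<mu>) / lam) T)"
    using conic_iff[OF assms(5,6,7)] by blast
  show ?thesis using P Q by blast
qed

end
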